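(* Let $\mathcal{A}=\{a_1,\ldots,a_n\}$ be a set of $n$ distinct positive integers and let $\phi:\mathbb{R}^n_{\ge0}\to\mathbb{R}^n_{\ge0}$, $\phi_j(x)=\sum_{i=1}^n x_i^{a_j}$. Then $\phi$ is injective up to permuting coordinates: if $x,y\in\mathbb{R}^n_{\ge0}$ satisfy $\phi(x)=\phi(y)$, then $y$ is obtained from $x$ by a permutation of the coordinates. Equivalently, a vector in $\mathbb{R}^n_{\ge0}$ is determined up to permutation of coordinates by its $p$-norms $\|x\|_p=(\sum_i x_i^p)^{1/p}$ for $p\in\mathcal{A}$. *)

theory Defs
  imports "HOL-Analysis.Analysis"
begin

end

theory Submission
  imports Defs "HOL-Computational_Algebra.Polynomial"
begin


lemma kernel_exists:
  fixes b :: "'n::finite \<Rightarrow> nat" and z :: "'n \<Rightarrow> real" and k0 :: 'n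
  shows "\<exists>e::real^'n. e \<noteq> 0 \<and> (\<forall>k. k \<noteq> k0 \<longrightarrow> (\<Sum>j\<in>UNIV. e$j * z k ^ b j) = 0)"
proof -
  define f where "f = (\<lambda>e::real^'n. \<chi> k. if k = k0 then 0 else (\<Sum>j\<in>UNIV. e$j * z k ^ b j))"
  have lin: "linear f"
    by (rule linearI) (auto simp: f_def vec_eq_iff sum.distrib sum_distrib_left algebra_simps)
  have "\<not> surj f"
  proof
    assume "surj f"
    then obtain e where "f e = axis k0 1" by (metis surjD)
    then have "f e $ k0 = 1" by (simp add: axis_def)
    then show False by (simp add: f_def)
  qed
  then have "\<not> inj f" using linear_injective_imp_surjective[OF lin] by blast
  then obtain e where "e \<noteq> 0" "f e = 0" using linear_injective_0[OF lin] by blast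
  then show ?thesis
    by (intro exI[of _ e]) (auto simp: f_def vec_eq_iff split: if_splits)
qed



lemma rolle_pts:
  fixes q :: "real poly"
  assumes "finite A"
  shows "(\<forall>a\<in>A. poly q a = 0) \<longrightarrow> (\<exists>X. finite X \<and> X \<inter> A = {} \<and> card A \<le> card X + 1 \<and>
     (\<forall>\<xi>\<in>X. poly (pderiv q) \<xi> = 0 \<and> (\<exists>u\<in>A. \<exists>v\<in>A. u < \<xi> \<and> \<xi> < v)))"
  using assms
proof (induction A rule: finite_linorder_max_induct)
  case empty
  then show ?case by (intro impI exI[of _ "{}"]) auto
next
  case (insert b A)
  show ?case
  proof
    assume z: "\<forall>a\<in>insert b A. poly q a = 0"
    show "\<exists>X. finite X \<and> X \<inter> insert b A = {} \<and> card (insert b A) \<le> card X + 1 \<and>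
     (\<forall>\<xi>\<in>X. poly (pderiv q) \<xi> = 0 \<and> (\<exists>u\<in>insert b A. \<exists>v\<in>insert b A. u < \<xi> \<and> \<xi> < v))"
    proof (cases "A = {}")
      case True
      then show ?thesis by (intro exI[of _ "{}"]) auto
    next
      case False
      from insert z obtain X where X: "finite X" "X \<inter> A = {}" "card A \<le> card X + 1"
        "\<forall>\<xi>\<in>X. poly (pderiv q) \<xi> = 0 \<and> (\<exists>u\<in>A. \<exists>v\<in>A. u < \<xi> \<and> \<xi> < v)" by auto
      define m where "m = Max A"
      have mA: "m \<in> A" "\<forall>a\<in>A. a \<le> m" using False insert(1) by (auto simp: m_def)
      have "m < b" using mA insert(2) by auto
      obtain \<xi> where xi: "m < \<xi>" "\<xi> < b" "poly q b - poly q m = (b - m) * poly (pderiv q) \<xi>"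
        using poly_MVT[OF \<open>m < b\<close>, of q] by blast
      have q0: "poly (pderiv q) \<xi> = 0" using xi z mA \<open>m < b\<close> by auto
      have Xlt: "\<forall>x\<in>X. x < m" using X(4) mA by fastforce
      have bnA: "b \<notin> A" using insert(2) by auto
      have xnX: "\<xi> \<notin> X" using Xlt xi by fastforce
      show ?thesis
      proof (intro exI[of _ "insert \<xi> X"] conjI)
        show "finite (insert \<xi> X)" using X by simp
        show "insert \<xi> X \<inter> insert b A = {}" using X Xlt xi mA \<open>m < b\<close> by fastforce
        show "card (insert b A) \<le> card (insert \<xi> X) + 1"
          using X xnX bnA insert(1) by simp
        show "\<forall>\<xi>'\<in>insert \<xi> X. poly (pderiv q) \<xi>' = 0 \<and> (\<exists>u\<in>insert b A. \<exists>v\<in>insert b A. u < \<xi>' \<and> \<xi>' < v)"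
          using X(4) q0 xi mA by blast
      qed
    qed
  qed
qed

lemma supp_finite: "finite {i. coeff (p::real poly) i \<noteq> 0}"
  by (rule finite_subset[of _ "{..degree p}"]) (auto intro: le_degree)

lemma shift_decomp:
  fixes p :: "real poly"
  assumes "p \<noteq> 0"
  obtains q where "coeff q 0 \<noteq> 0" "card {i. coeff q i \<noteq> 0} = card {i. coeff p i \<noteq> 0}"
    "\<And>z. z \<noteq> 0 \<Longrightarrow> order z p = order z q" "q \<noteq> 0"
proof -
  define k where "k = order 0 p"
  obtain q where q: "p = [:-0,1:]^k * q" "\<not> [:-0,1:] dvd q" using order_decomp[OF assms] k_def by blast
  have "poly q 0 \<noteq> 0" using q(2) poly_eq_0_iff_dvd[of q 0] by simp
  hence c0: "coeff q 0 \<noteq> 0" by (simp add: poly_0_coeff_0)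
  have mk: "[:-0,1:]^k = monom (1::real) k" by (simp add: monom_altdef)
  have pq: "p = monom 1 k * q" using q(1) mk by simp
  have "{i. coeff p i \<noteq> 0} = (\<lambda>i. i + k) ` {i. coeff q i \<noteq> 0}"
  proof (rule set_eqI)
    fix i
    show "i \<in> {i. coeff p i \<noteq> 0} \<longleftrightarrow> i \<in> (\<lambda>i. i + k) ` {i. coeff q i \<noteq> 0}"
      unfolding pq coeff_monom_mult
      by (cases "i < k") (auto simp: image_iff intro!: exI[of _ "i - k"])
  qed
  hence cd: "card {i. coeff q i \<noteq> 0} = card {i. coeff p i \<noteq> 0}"
    by (simp add: card_image inj_on_def)
  have qn: "q \<noteq> 0" using c0 by auto
  have ord: "order z p = order z q" if "z \<noteq> 0" for z
  proof -
    have "poly (monom (1::real) k) z \<noteq> 0" using that by (simp add: poly_monom)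
    hence "order z (monom 1 k) = 0" using order_root by blast
    thus ?thesis using order_mult[of "monom 1 k" q z] pq assms by simp
  qed
  show ?thesis using that c0 cd ord qn by blast
qed

lemma deg0_poly: "degree (q::real poly) = 0 \<Longrightarrow> poly q z = coeff q 0"
  by (metis degree_0_id add.right_neutral mult_zero_right poly_0 poly_pCons)

lemma deg0_sum:
  fixes q :: "real poly"
  assumes "degree q = 0" "coeff q 0 \<noteq> 0"
  shows "(\<Sum>z\<in>Z. order z q) = 0"
proof -
  have "order z q = 0" for z
  proof -
    have "poly q z \<noteq> 0" using assms deg0_poly[of q z] by simp
    thus ?thesis using order_root[of q z] by blast
  qed
  thus ?thesis by simp
qed

lemma supp_pderiv:
  fixes q :: "real poly"
  assumes "coeff q 0 \<noteq> 0"
  shows "card {i. coeff (pderiv q) i \<noteq> 0} + 1 = card {i. coeff q i \<noteq> 0}"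
proof -
  have e: "{i. coeff (pderiv q) i \<noteq> 0} = {i. coeff q (Suc i) \<noteq> 0}"
  proof (rule Collect_cong)
    fix i show "(coeff (pderiv q) i \<noteq> 0) = (coeff q (Suc i) \<noteq> 0)"
      unfolding coeff_pderiv by (metis mult_eq_0_iff of_nat_eq_0_iff nat.distinct(1))
  qed
  have im: "Suc ` {i. coeff q (Suc i) \<noteq> 0} = {i. coeff q i \<noteq> 0} - {0}"
  proof (rule set_eqI)
    fix i show "i \<in> Suc ` {i. coeff q (Suc i) \<noteq> 0} \<longleftrightarrow> i \<in> {i. coeff q i \<noteq> 0} - {0}"
      by (cases i) auto
  qed
  have "card {i. coeff q (Suc i) \<noteq> 0} = card (Suc ` {i. coeff q (Suc i) \<noteq> 0})"
    by (rule card_image[symmetric]) (simp add: inj_on_def)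
  also have "\<dots> = card ({i. coeff q i \<noteq> 0} - {0})" using im by simp
  also have "\<dots> = card {i. coeff q i \<noteq> 0} - 1"
    by (rule card_Diff_singleton) (use assms in simp)
  finally have "card {i. coeff q (Suc i) \<noteq> 0} = card {i. coeff q i \<noteq> 0} - 1" .
  moreover have "card {i. coeff q i \<noteq> 0} \<ge> 1"
    using assms supp_finite[of q] by (metis (mono_tags) card_0_eq empty_iff less_one mem_Collect_eq not_le)
  ultimately show ?thesis using e by simp
qed

lemma dw:
  fixes p :: "real poly"
  shows "p \<noteq> 0 \<Longrightarrow> card {k. coeff p k \<noteq> 0} \<le> Suc m \<Longrightarrow> finite Z \<Longrightarrow> Z \<subseteq> {0<..} \<Longrightarrow>
    (\<Sum>z\<in>Z. order z p) \<le> m"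
proof (induction m arbitrary: p Z)
  case (0 p Z)
  obtain q where q: "coeff q 0 \<noteq> 0" "card {i. coeff q i \<noteq> 0} = card {i. coeff p i \<noteq> 0}"
    "\<And>z. z \<noteq> 0 \<Longrightarrow> order z p = order z q" "q \<noteq> 0" using shift_decomp[OF 0(1)] by blast
  have s: "(\<Sum>z\<in>Z. order z p) = (\<Sum>z\<in>Z. order z q)" using q(3) 0(4) by (intro sum.cong) auto
  have "{i. coeff q i \<noteq> 0} \<subseteq> {0}"
  proof -
    have "card {i. coeff q i \<noteq> 0} \<le> 1" using q(2) 0(2) by simp
    moreover have "0 \<in> {i. coeff q i \<noteq> 0}" using q(1) by simp
    ultimately have "\<forall>a1\<in>{i. coeff q i \<noteq> 0}. \<forall>a2\<in>{i. coeff q i \<noteq> 0}. a1 = a2"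
      using supp_finite[of q] card_le_Suc0_iff_eq[of "{i. coeff q i \<noteq> 0}"] by simp
    thus ?thesis using q(1) by blast
  qed
  moreover have "degree q \<in> {i. coeff q i \<noteq> 0}" using q(4) by simp
  ultimately have "degree q = 0" by blast
  thus ?case using s deg0_sum[of q Z] q(1) by simp
next
  case (Suc m p Z)
  obtain q where q: "coeff q 0 \<noteq> 0" "card {i. coeff q i \<noteq> 0} = card {i. coeff p i \<noteq> 0}"
    "\<And>z. z \<noteq> 0 \<Longrightarrow> order z p = order z q" "q \<noteq> 0" using shift_decomp[OF Suc(2)] by blast
  have s: "(\<Sum>z\<in>Z. order z p) = (\<Sum>z\<in>Z. order z q)" using q(3) Suc(5) by (intro sum.cong) auto
  show ?case
  proof (cases "degree q = 0")
    case True
    thus ?thesis using s deg0_sum[of q Z] q(1) by simp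
  next
    case False
    have q'0: "pderiv q \<noteq> 0" using False pderiv_eq_0_iff[of q] by simp
    have cq': "card {i. coeff (pderiv q) i \<noteq> 0} \<le> Suc m"
      using supp_pderiv[OF q(1)] q(2) Suc(3) by simp
    define Z1 where "Z1 = {z\<in>Z. poly q z = 0}"
    have fZ1: "finite Z1" using Suc(4) Z1_def by simp
    have z1: "\<forall>a\<in>Z1. poly q a = 0" by (simp add: Z1_def)
    obtain X where X: "finite X" "X \<inter> Z1 = {}" "card Z1 \<le> card X + 1"
      "\<forall>\<xi>\<in>X. poly (pderiv q) \<xi> = 0 \<and> (\<exists>u\<in>Z1. \<exists>v\<in>Z1. u < \<xi> \<and> \<xi> < v)"
      using mp[OF rolle_pts[OF fZ1, of q] z1] by (elim exE conjE) 
    have Xpos: "X \<subseteq> {0<..}"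
    proof
      fix \<xi> assume "\<xi> \<in> X"
      then obtain u where u: "u \<in> Z1" "u < \<xi>" using X(4) by blast
      hence "u \<in> Z" by (simp add: Z1_def)
      hence "0 < u" using Suc(5) by auto
      thus "\<xi> \<in> {0<..}" using u by simp
    qed
    have Z1pos: "Z1 \<subseteq> {0<..}" using Suc(5) Z1_def by auto
    have IH: "(\<Sum>z\<in>Z1 \<union> X. order z (pderiv q)) \<le> m"
    proof (rule Suc.IH[OF q'0 cq'])
      show "finite (Z1 \<union> X)" using fZ1 X(1) by simp
      show "Z1 \<union> X \<subseteq> {0<..}" using Xpos Z1pos by simp
    qed
    have "(\<Sum>z\<in>Z. order z q) = (\<Sum>z\<in>Z1. order z q)"
    proof -
      have "(\<Sum>z\<in>Z. order z q) = (\<Sum>z\<in>Z1. order z q) + (\<Sum>z\<in>Z - Z1. order z q)"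
      proof -
        have "Z1 \<subseteq> Z" by (auto simp: Z1_def)
        from sum.subset_diff[OF this Suc(4), of "\<lambda>z. order z q"] show ?thesis by linarith
      qed
      moreover have "(\<Sum>z\<in>Z - Z1. order z q) = 0"
      proof (rule sum.neutral, rule ballI)
        fix z assume "z \<in> Z - Z1"
        hence "poly q z \<noteq> 0" by (simp add: Z1_def)
        thus "order z q = 0" using order_root[of q z] by simp
      qed
      ultimately show ?thesis by simp
    qed
    also have "\<dots> = (\<Sum>z\<in>Z1. Suc (order z (pderiv q)))"
    proof (rule sum.cong[OF refl])
      fix z assume "z \<in> Z1"
      hence "poly q z = 0" by (simp add: Z1_def)
      thus "order z q = Suc (order z (pderiv q))" by (rule order_pderiv[OF q(4)])
    qed
    also have "\<dots> = (\<Sum>z\<in>Z1. order z (pderiv q)) + card Z1" using fZ1 by (induct rule: finite_induct) auto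
    also have "\<dots> \<le> (\<Sum>z\<in>Z1. order z (pderiv q)) + card X + 1" using X(3) by simp
    finally have A: "(\<Sum>z\<in>Z. order z q) \<le> (\<Sum>z\<in>Z1. order z (pderiv q)) + card X + 1" .
    have B: "card X \<le> (\<Sum>z\<in>X. order z (pderiv q))"
    proof -
      have "\<forall>z\<in>X. 1 \<le> order z (pderiv q)"
      proof
        fix z assume "z \<in> X"
        hence "poly (pderiv q) z = 0" using X(4) by simp
        hence "order z (pderiv q) \<noteq> 0" using order_root[of "pderiv q" z] q'0 by simp
        thus "1 \<le> order z (pderiv q)" by simp
      qed
      hence "(\<Sum>z\<in>X. (1::nat)) \<le> (\<Sum>z\<in>X. order z (pderiv q))" by (intro sum_mono) auto
      thus ?thesis by simp
    qed
    have "Z1 \<inter> X = {}" using X(2) by blast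
    from sum.union_disjoint[OF fZ1 X(1) this, of "\<lambda>z. order z (pderiv q)"] A B IH s
    show ?thesis by linarith
  qed
qed



lemma prod_dvd:
  fixes Q :: "real poly"
  assumes "finite Z"
  shows "(\<forall>z\<in>Z. poly Q z = 0) \<longrightarrow> (\<Prod>z\<in>Z. [:-z,1:]) dvd Q"
  using assms
proof (induction Z rule: finite_induct)
  case empty
  then show ?case by simp
next
  case (insert z Z)
  show ?case
  proof
    assume h: "\<forall>w\<in>insert z Z. poly Q w = 0"
    then obtain R where R: "Q = (\<Prod>w\<in>Z. [:-w,1:]) * R" using insert(3) by (auto elim: dvdE)
    have "poly (\<Prod>w\<in>Z. [:-w,1:]) z \<noteq> 0"
      using insert(1,2) by (simp add: poly_prod prod_zero_iff)
    moreover have "poly Q z = 0" using h by simp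
    ultimately have "poly R z = 0" using R by simp
    hence "[:-z,1:] dvd R" by (simp add: poly_eq_0_iff_dvd)
    then obtain R' where "R = [:-z,1:] * R'" by (rule dvdE)
    hence "Q = [:-z,1:] * (\<Prod>w\<in>Z. [:-w,1:]) * R'" using R by (simp only: mult_ac)
    moreover have e: "(\<Prod>w\<in>insert z Z. [:-w,1:]) = [:-z,1:] * (\<Prod>w\<in>Z. [:-w,1:])"
      by (rule prod.insert[OF insert(1,2)])
    ultimately have "Q = (\<Prod>w\<in>insert z Z. [:-w,1:]) * R'" by simp
    thus "(\<Prod>w\<in>insert z Z. [:-w,1:]) dvd Q" by simp
  qed
qed

lemma prod_sign:
  fixes s :: real
  assumes "finite Z"
  shows "s \<notin> Z \<longrightarrow> 0 < (-1) ^ card {z\<in>Z. s < z} * poly (\<Prod>z\<in>Z. [:-z,1:]) s"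
  using assms
proof (induction Z rule: finite_induct)
  case empty
  then show ?case by simp
next
  case (insert z Z)
  show ?case
  proof
    assume sn: "s \<notin> insert z Z"
    hence IH: "0 < (-1) ^ card {z\<in>Z. s < z} * poly (\<Prod>z\<in>Z. [:-z,1:]) s" using insert by simp
    have pe: "poly (\<Prod>w\<in>insert z Z. [:-w,1:]) s = (s - z) * poly (\<Prod>w\<in>Z. [:-w,1:]) s"
      using insert(1,2) by (simp add: poly_prod algebra_simps)
    show "0 < (-1) ^ card {w\<in>insert z Z. s < w} * poly (\<Prod>w\<in>insert z Z. [:-w,1:]) s"
    proof (cases "s < z")
      case True
      have "{w\<in>insert z Z. s < w} = insert z {w\<in>Z. s < w}" using True by auto
      hence c: "card {w\<in>insert z Z. s < w} = Suc (card {w\<in>Z. s < w})" using insert(1,2) by simp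
      have "(-1) ^ card {w\<in>insert z Z. s < w} * poly (\<Prod>w\<in>insert z Z. [:-w,1:]) s
          = (z - s) * ((-1) ^ card {z\<in>Z. s < z} * poly (\<Prod>z\<in>Z. [:-z,1:]) s)"
        unfolding c pe by (simp add: algebra_simps)
      thus ?thesis using IH True by simp
    next
      case False
      hence "s > z" using sn by auto
      have "{w\<in>insert z Z. s < w} = {w\<in>Z. s < w}" using False by auto
      hence "(-1) ^ card {w\<in>insert z Z. s < w} * poly (\<Prod>w\<in>insert z Z. [:-w,1:]) s
          = (s - z) * ((-1) ^ card {z\<in>Z. s < z} * poly (\<Prod>z\<in>Z. [:-z,1:]) s)"
        unfolding pe by (simp add: algebra_simps)
      thus ?thesis using IH \<open>s > z\<close> by simp
    qed
  qed
qed

lemma struct_sign: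
  fixes Q :: "real poly"
  assumes Q0: "Q \<noteq> 0" and cQ: "card {k. coeff Q k \<noteq> 0} \<le> Suc m"
    and fZ: "finite Z0" and cZ: "card Z0 = m" and pZ: "Z0 \<subseteq> {0<..}"
    and vz: "\<forall>z\<in>Z0. poly Q z = 0"
  shows "\<exists>\<rho>::real. (\<rho> = 1 \<or> \<rho> = -1) \<and> (\<forall>s>0. s \<notin> Z0 \<longrightarrow> 0 < \<rho> * (-1) ^ card {z\<in>Z0. s < z} * poly Q s)"
proof -
  define T where "T = (\<Prod>z\<in>Z0. [:-z,1:])"
  obtain R where QR: "Q = T * R" using mp[OF prod_dvd[OF fZ] vz] unfolding T_def by (auto elim: dvdE)
  have T0: "T \<noteq> 0" and R0: "R \<noteq> 0" using Q0 QR by auto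
  have Rnz: "poly R r \<noteq> 0" if r: "r > 0" for r
  proof
    assume Rr: "poly R r = 0"
    define A where "A = insert r Z0"
    have fA: "finite A" using fZ A_def by simp
    have pA: "A \<subseteq> {0<..}" using pZ r A_def by auto
    have le: "(\<Sum>z\<in>A. order z Q) \<le> m" using dw[OF Q0 cQ fA pA] .
    have eq: "(\<Sum>z\<in>A. order z Q) = (\<Sum>z\<in>A. order z T) + (\<Sum>z\<in>A. order z R)"
      unfolding QR using order_mult[of T R] Q0 QR by (simp add: sum.distrib)
    have "m \<le> (\<Sum>z\<in>Z0. order z T)"
    proof -
      have "\<forall>z\<in>Z0. 1 \<le> order z T"
      proof
        fix z assume "z \<in> Z0"
        hence "poly T z = 0" unfolding T_def using fZ by (simp add: poly_prod prod_zero_iff)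
        hence "order z T \<noteq> 0" using order_root[of T z] T0 by simp
        thus "1 \<le> order z T" by simp
      qed
      hence "(\<Sum>z\<in>Z0. (1::nat)) \<le> (\<Sum>z\<in>Z0. order z T)" by (intro sum_mono) auto
      thus ?thesis using cZ by simp
    qed
    also have "\<dots> \<le> (\<Sum>z\<in>A. order z T)" using fA A_def by (intro sum_mono2) auto
    finally have a1: "m \<le> (\<Sum>z\<in>A. order z T)" .
    have "order r R \<noteq> 0" using order_root[of R r] Rr R0 by simp
    moreover have "order r R \<le> (\<Sum>z\<in>A. order z R)" using fA A_def by (intro member_le_sum) auto
    ultimately show False using a1 eq le by linarith
  qed
  define \<rho> where "\<rho> = (if poly R 1 > 0 then 1 else -1::real)"
  have Rs: "0 < \<rho> * poly R s" if s: "s > 0" for s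
  proof (rule ccontr)
    assume "\<not> 0 < \<rho> * poly R s"
    moreover have "poly R s \<noteq> 0" "poly R 1 \<noteq> 0" using Rnz s by auto
    ultimately have neg: "poly R 1 * poly R s < 0" unfolding \<rho>_def
      by (auto split: if_splits simp: mult_less_0_iff)
    show False
    proof (cases "s < 1")
      case True
      obtain x where "s < x" "x < 1" "poly R x = 0" using poly_IVT[OF True, of R] neg by (auto simp: mult.commute)
      thus False using Rnz s by auto
    next
      case False
      show False
      proof (cases "s = 1")
        case True thus False using neg by (simp add: mult_less_0_iff)
      next
        case False
        hence "1 < s" using \<open>\<not> s < 1\<close> by simp
        obtain x where "1 < x" "x < s" "poly R x = 0" using poly_IVT[OF \<open>1 < s\<close>, of R] neg by auto
        thus False using Rnz by auto
      qed
    qed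
  qed
  show ?thesis
  proof (intro exI[of _ \<rho>] conjI allI impI)
    show "\<rho> = 1 \<or> \<rho> = -1" by (simp add: \<rho>_def)
    fix s :: real assume s: "s > 0" "s \<notin> Z0"
    have "0 < (-1) ^ card {z\<in>Z0. s < z} * poly T s" using mp[OF prod_sign[OF fZ] s(2)] T_def by simp
    moreover have "0 < \<rho> * poly R s" using Rs s by simp
    ultimately have "0 < ((-1) ^ card {z\<in>Z0. s < z} * poly T s) * (\<rho> * poly R s)" by simp
    thus "0 < \<rho> * (-1) ^ card {z\<in>Z0. s < z} * poly Q s" unfolding QR by (simp add: mult_ac)
  qed
qed



lemma neg1_pow: "(-1::int) ^ k = 1 \<or> (-1::int) ^ k = -1"
  by (cases "even k") auto

lemma wlemma:
  fixes X Y :: "real \<Rightarrow> nat" and N :: "real set"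
  assumes antiX: "\<And>s t. s \<le> t \<Longrightarrow> X t \<le> X s" and antiY: "\<And>s t. s \<le> t \<Longrightarrow> Y t \<le> Y s"
    and fN: "finite N"
  shows "(\<forall>v\<in>N. X v \<noteq> Y v) \<longrightarrow> (\<exists>W (\<epsilon>::int). W \<subseteq> N \<and> (\<epsilon> = 1 \<or> \<epsilon> = -1) \<and>
     (\<forall>v\<in>N. 0 < \<epsilon> * (-1)^card {w\<in>W. v \<le> w} * (int (X v) - int (Y v))) \<and>
     (N \<noteq> {} \<longrightarrow> 2 * card W + 1 \<le> X (Min N) + Y (Min N)))"
  using fN
proof (induction N rule: finite_linorder_min_induct)
  case empty
  then show ?case by (intro impI exI[of _ "{}"] exI[of _ 1]) auto
next
  case (insert b A)
  show ?case
  proof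
    assume nz: "\<forall>v\<in>insert b A. X v \<noteq> Y v"
    define D where "D v = int (X v) - int (Y v)" for v
    have Db: "D b \<noteq> 0" using nz D_def by auto
    show "\<exists>W (\<epsilon>::int). W \<subseteq> insert b A \<and> (\<epsilon> = 1 \<or> \<epsilon> = -1) \<and>
     (\<forall>v\<in>insert b A. 0 < \<epsilon> * (-1)^card {w\<in>W. v \<le> w} * (int (X v) - int (Y v))) \<and>
     (insert b A \<noteq> {} \<longrightarrow> 2 * card W + 1 \<le> X (Min (insert b A)) + Y (Min (insert b A)))"
    proof (cases "A = {}")
      case True
      define \<epsilon> where "\<epsilon> = (if D b > 0 then 1 else -1::int)"
      have "0 < \<epsilon> * D b" using Db \<epsilon>_def by (auto simp: mult_less_0_iff)
      moreover have "1 \<le> X b + Y b" using nz by auto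
      ultimately show ?thesis using True
        by (intro exI[of _ "{}"] exI[of _ \<epsilon>]) (auto simp: \<epsilon>_def D_def)
    next
      case False
      from insert(3) nz obtain W' \<epsilon>' where W': "W' \<subseteq> A" "\<epsilon>' = 1 \<or> \<epsilon>' = -1"
        "\<forall>v\<in>A. 0 < \<epsilon>' * (-1)^card {w\<in>W'. v \<le> w} * D v"
        "2 * card W' + 1 \<le> X (Min A) + Y (Min A)" using False D_def by auto
      define u where "u = Min A"
      have uA: "u \<in> A" and bu: "b < u" using False insert(1,2) u_def by auto
      have Minb: "Min (insert b A) = b" using insert(1,2) False
        by (meson Min_insert2 insert.hyps(2) less_imp_le)
      have bW': "b \<notin> W'" using W'(1) insert(2) by auto
      have cb: "{w\<in>W'. b \<le> w} = W'" using W'(1) insert(2) by force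
      have cu: "{w\<in>W'. u \<le> w} = W'" using W'(1) insert(1) u_def by auto
      define \<sigma> where "\<sigma> = \<epsilon>' * (-1)^card W'"
      have \<sigma>: "\<sigma> = 1 \<or> \<sigma> = -1" using W'(2) neg1_pow[of "card W'"] \<sigma>_def by auto
      have su: "0 < \<sigma> * D u" using W'(3) uA cu \<sigma>_def by force
      have mono: "X u \<le> X b" "Y u \<le> Y b" using bu antiX antiY by auto
      show ?thesis
      proof (cases "0 < \<sigma> * D b")
        case True
        show ?thesis
        proof (intro exI[of _ W'] exI[of _ \<epsilon>'] conjI)
          show "W' \<subseteq> insert b A" using W'(1) by auto
          show "\<epsilon>' = 1 \<or> \<epsilon>' = -1" by fact
          show "\<forall>v\<in>insert b A. 0 < \<epsilon>' * (-1)^card {w\<in>W'. v \<le> w} * (int (X v) - int (Y v))"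
            using W'(3) True cb \<sigma>_def D_def by auto
          show "insert b A \<noteq> {} \<longrightarrow> 2 * card W' + 1 \<le> X (Min (insert b A)) + Y (Min (insert b A))"
            using W'(4) Minb mono u_def by simp
        qed
      next
        case False
        have sb: "\<sigma> * D b < 0" using False Db \<sigma> by auto
        have gap: "X u + Y u + 2 \<le> X b + Y b"
          using \<sigma> su sb mono unfolding D_def by auto
        have ci: "card (insert b W') = Suc (card W')"
        proof -
          have "finite W'" using W'(1) insert(1) by (rule finite_subset)
          thus ?thesis using bW' by simp
        qed
        show ?thesis
        proof (intro exI[of _ "insert b W'"] exI[of _ \<epsilon>'] conjI)
          show "insert b W' \<subseteq> insert b A" using W'(1) by auto
          show "\<epsilon>' = 1 \<or> \<epsilon>' = -1" by fact
          have "{w\<in>insert b W'. b \<le> w} = insert b W'" using cb by auto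
          hence "0 < \<epsilon>' * (-1)^card {w\<in>insert b W'. b \<le> w} * D b"
            using sb ci \<sigma>_def by simp
          moreover have "0 < \<epsilon>' * (-1)^card {w\<in>insert b W'. v \<le> w} * D v" if "v \<in> A" for v
          proof -
            have "{w\<in>insert b W'. v \<le> w} = {w\<in>W'. v \<le> w}" using insert(2) that by auto
            thus ?thesis using W'(3) that by simp
          qed
          ultimately show "\<forall>v\<in>insert b A. 0 < \<epsilon>' * (-1)^card {w\<in>insert b W'. v \<le> w} * (int (X v) - int (Y v))"
            unfolding D_def by auto
          show "insert b A \<noteq> {} \<longrightarrow> 2 * card (insert b W') + 1 \<le> X (Min (insert b A)) + Y (Min (insert b A))"
            using W'(4) Minb gap ci u_def by simp
        qed
      qed
    qed
  qed
qed



lemma integral_identity: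
  fixes P :: "real poly" and xs :: "'n::finite \<Rightarrow> real"
  assumes xs: "\<And>i. 0 \<le> xs i \<and> xs i \<le> M"
  shows "((\<lambda>s. poly (pderiv P) s * real (card {i. s \<le> xs i})) has_integral
           (\<Sum>i\<in>UNIV. poly P (xs i) - poly P 0)) {0..M}"
proof -
  have one: "((\<lambda>s. if s \<in> cbox 0 (xs i) then poly (pderiv P) s else 0) has_integral
           (poly P (xs i) - poly P 0)) (cbox 0 M)" for i
  proof (rule has_integral_restrict_closed_subinterval)
    have "(poly (pderiv P) has_integral (poly P (xs i) - poly P 0)) {0..xs i}"
    proof (rule fundamental_theorem_of_calculus)
      show "0 \<le> xs i" using xs by simp
      fix s assume "s \<in> {0..xs i}"
      show "(poly P has_vector_derivative poly (pderiv P) s) (at s within {0..xs i})"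
        using poly_DERIV[of P s] unfolding has_real_derivative_iff_has_vector_derivative[symmetric]
        by (rule has_field_derivative_at_within)
    qed
    thus "(poly (pderiv P) has_integral (poly P (xs i) - poly P 0)) (cbox 0 (xs i))" by simp
    show "cbox 0 (xs i) \<subseteq> cbox 0 M" using xs by auto
  qed
  have "((\<lambda>s. \<Sum>i\<in>UNIV. if s \<in> cbox 0 (xs i) then poly (pderiv P) s else 0) has_integral
           (\<Sum>i\<in>UNIV. poly P (xs i) - poly P 0)) (cbox 0 M)"
    by (rule has_integral_sum) (use one in auto)
  moreover have "(\<Sum>i\<in>UNIV. if s \<in> cbox 0 (xs i) then poly (pderiv P) s else 0) =
      poly (pderiv P) s * real (card {i. s \<le> xs i})" if s: "s \<in> cbox 0 M" for s
  proof -
    have "(\<Sum>i\<in>UNIV. if s \<in> cbox 0 (xs i) then poly (pderiv P) s else 0) =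
        (\<Sum>i\<in>UNIV. poly (pderiv P) s * of_bool (s \<le> xs i))"
      using s by (intro sum.cong) auto
    also have "\<dots> = poly (pderiv P) s * (\<Sum>i\<in>UNIV. of_bool (s \<le> xs i))"
      by (simp add: sum_distrib_left)
    also have "(\<Sum>i\<in>UNIV. of_bool (s \<le> xs i) :: real) = real (card {i. s \<le> xs i})"
      by (subst sum_of_bool_eq) auto
    finally show ?thesis .
  qed
  ultimately show ?thesis using has_integral_cong by (metis (no_types, lifting) cbox_interval)
qed

lemma counts_from_X:
  fixes xs ys :: "'n::finite \<Rightarrow> real"
  assumes "\<And>s. card {i. s \<le> xs i} = card {i. s \<le> ys i}"
  shows "card {i. xs i = v} = card {i. ys i = v}"
proof -
  define V where "V = {u. \<exists>i. u = xs i \<or> u = ys i}"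
  have fV: "finite V"
  proof -
    have "V \<subseteq> range xs \<union> range ys" unfolding V_def by auto
    thus ?thesis by (rule finite_subset) auto
  qed
  define U where "U = {u\<in>V. v < u}"
  define \<delta> where "\<delta> = (if U = {} then 1 else Min U - v)"
  have fU: "finite U" using fV U_def by simp
  have dpos: "0 < \<delta>" using fU U_def \<delta>_def by auto
  have key: "v < u \<longleftrightarrow> v + \<delta> \<le> u" if "u \<in> V" for u
  proof
    assume "v < u"
    hence "u \<in> U" using that U_def by simp
    hence "Min U \<le> u" "U \<noteq> {}" using fU by auto
    thus "v + \<delta> \<le> u" using \<delta>_def by simp
  qed (use dpos in simp)
  have gen: "card {i. zs i = v} = card {i. v \<le> zs i} - card {i. v + \<delta> \<le> zs i}"
    if zV: "\<And>i. zs i \<in> V" for zs :: "'n \<Rightarrow> real"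
  proof -
    have "{i. zs i = v} = {i. v \<le> zs i} - {i. v + \<delta> \<le> zs i}"
      using key zV by fastforce
    moreover have "{i. v + \<delta> \<le> zs i} \<subseteq> {i. v \<le> zs i}" using dpos by auto
    ultimately show ?thesis by (simp add: card_Diff_subset)
  qed
  have "card {i. xs i = v} = card {i. v \<le> xs i} - card {i. v + \<delta> \<le> xs i}"
    by (rule gen) (auto simp: V_def)
  also have "\<dots> = card {i. v \<le> ys i} - card {i. v + \<delta> \<le> ys i}" using assms by simp
  also have "\<dots> = card {i. ys i = v}" by (rule gen[symmetric]) (auto simp: V_def)
  finally show ?thesis .
qed

lemma perm_from_counts:
  fixes f g :: "'n::finite \<Rightarrow> 'b"
  assumes "\<And>v. card {i. f i = v} = card {i. g i = v}"
  shows "\<exists>\<sigma>. \<sigma> permutes (UNIV :: 'n set) \<and> (\<forall>i. g i = f (\<sigma> i))"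
proof -
  have "\<forall>v. \<exists>h. bij_betw h {i. g i = v} {i. f i = v}"
    using assms by (intro allI finite_same_card_bij) auto
  then obtain H where H: "\<And>v. bij_betw (H v) {i. g i = v} {i. f i = v}" by metis
  define \<sigma> where "\<sigma> i = H (g i) i" for i
  have fs: "f (\<sigma> i) = g i" for i
    using bij_betwE[OF H[of "g i"]] \<sigma>_def by auto
  have "inj \<sigma>"
  proof (rule injI)
    fix i j assume e: "\<sigma> i = \<sigma> j"
    hence gij: "g i = g j" using fs by metis
    have "H (g i) i = H (g i) j" using e gij \<sigma>_def by simp
    moreover have "inj_on (H (g i)) {k. g k = g i}" using H bij_betw_def by blast
    ultimately show "i = j" using gij by (auto dest: inj_onD)
  qed
  hence "bij \<sigma>" unfolding bij_def using finite_UNIV_inj_surj[of \<sigma>] by simp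
  hence "\<sigma> permutes UNIV" by (intro bij_imp_permutes) auto
  thus ?thesis using fs by auto
qed


lemma pderiv_sum: "pderiv (\<Sum>j\<in>A. f j) = (\<Sum>j\<in>A. pderiv (f j))"
  by (induct A rule: infinite_finite_induct) (auto simp: pderiv_add)

theorem proposition5p1:
  fixes a :: "'n::finite \<Rightarrow> nat" and x y :: "real ^ 'n"
  assumes a_inj: "inj a"
    and a_pos: "\<And>j. a j > 0"
    and x_nonneg: "\<And>i. x $ i \<ge> 0"
    and y_nonneg: "\<And>i. y $ i \<ge> 0"
    and phi_eq: "\<And>j. (\<Sum>i\<in>UNIV. (x $ i) ^ (a j)) = (\<Sum>i\<in>UNIV. (y $ i) ^ (a j))"
  shows "\<exists>\<sigma>. \<sigma> permutes (UNIV :: 'n set) \<and> (\<forall>i. y $ i = x $ (\<sigma> i))"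
proof -
  define X where "X s = card {i. s \<le> x $ i}" for s
  define Y where "Y s = card {i. s \<le> y $ i}" for s
  define n where "n = CARD('n)"
  have Xle: "X s \<le> n" "Y s \<le> n" for s unfolding X_def Y_def n_def by (simp_all add: card_mono)
  have Xneg: "X s = n" "Y s = n" if "s \<le> 0" for s
  proof -
    have "{i. s \<le> x $ i} = UNIV" "{i. s \<le> y $ i} = UNIV"
      using that x_nonneg y_nonneg by (auto intro: order_trans)
    thus "X s = n" "Y s = n" unfolding X_def Y_def n_def by simp_all
  qed
  have key: "\<forall>s>0. X s = Y s"
  proof (rule ccontr)
    assume "\<not> (\<forall>s>0. X s = Y s)"
    then obtain s0 where s0: "0 < s0" "X s0 \<noteq> Y s0" by auto
    have n0: "0 < n" unfolding n_def by simp
    then obtain m where nm: "n = Suc m" using not0_implies_Suc by blast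
    define V where "V = (\<lambda>i. x $ i) ` UNIV \<union> (\<lambda>i. y $ i) ` UNIV"
    have fV: "finite V" unfolding V_def by simp
    have Vnn: "\<forall>u\<in>V. 0 \<le> u" unfolding V_def using x_nonneg y_nonneg by auto
    have xV: "x $ i \<in> V" "y $ i \<in> V" for i unfolding V_def by auto
    define N where "N = {v\<in>V. 0 < v \<and> X v \<noteq> Y v}"
    have fN: "finite N" using fV N_def by simp
    have antiX: "X t \<le> X s" if "s \<le> t" for s t
      unfolding X_def using that by (intro card_mono) auto
    have antiY: "Y t \<le> Y s" if "s \<le> t" for s t
      unfolding Y_def using that by (intro card_mono) auto
    have nzN: "\<forall>v\<in>N. X v \<noteq> Y v" using N_def by simp
    obtain W and \<epsilon>0 :: int where W: "W \<subseteq> N" "\<epsilon>0 = 1 \<or> \<epsilon>0 = -1"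
      "\<forall>v\<in>N. 0 < \<epsilon>0 * (-1)^card {w\<in>W. v \<le> w} * (int (X v) - int (Y v))"
      "N \<noteq> {} \<longrightarrow> 2 * card W + 1 \<le> X (Min N) + Y (Min N)"
      using mp[OF wlemma[of X Y N, OF antiX antiY fN] nzN] by blast
    have fW: "finite W" using W(1) fN finite_subset by blast
    have cW: "card W \<le> m"
    proof (cases "N = {}")
      case True thus ?thesis using W(1) by simp
    next
      case False
      hence "Min N \<in> N" using fN by simp
      hence "X (Min N) \<noteq> Y (Min N)" using N_def by simp
      hence "X (Min N) + Y (Min N) \<le> 2 * n - 1" using Xle[of "Min N"] by linarith
      thus ?thesis using W(4) False nm by linarith
    qed
    have transfer: "0 < \<epsilon>0 * (-1)^card {w\<in>W. s < w} * (int (X s) - int (Y s))"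
      if s: "0 < s" "s \<notin> W" "X s \<noteq> Y s" for s
    proof -
      define Vs where "Vs = {u\<in>V. s \<le> u}"
      have fVs: "finite Vs" using fV Vs_def by simp
      have "Vs \<noteq> {}"
      proof
        assume "Vs = {}"
        hence "{i. s \<le> x $ i} = {}" "{i. s \<le> y $ i} = {}" using xV Vs_def by auto
        thus False using s(3) X_def Y_def by simp
      qed
      define v where "v = Min Vs"
      have vVs: "v \<in> Vs" using fVs \<open>Vs \<noteq> {}\<close> v_def by simp
      have vmin: "\<And>u. u \<in> Vs \<Longrightarrow> v \<le> u" using fVs v_def by simp
      have sv: "s \<le> v" using vVs Vs_def by simp
      have eqx: "{i. s \<le> x $ i} = {i. v \<le> x $ i}"
        using vmin xV Vs_def sv by (force intro: order_trans)
      have eqy: "{i. s \<le> y $ i} = {i. v \<le> y $ i}"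
        using vmin xV Vs_def sv by (force intro: order_trans)
      have XYv: "X s = X v" "Y s = Y v" using eqx eqy X_def Y_def by simp_all
      have vN: "v \<in> N" using vVs Vs_def N_def XYv s sv by auto
      have "{w\<in>W. s < w} = {w\<in>W. v \<le> w}"
      proof (rule set_eqI, rule iffI)
        fix w assume "w \<in> {w\<in>W. s < w}"
        hence "w \<in> Vs" "w \<in> W" using W(1) N_def Vs_def by auto
        thus "w \<in> {w\<in>W. v \<le> w}" using vmin by simp
      next
        fix w assume "w \<in> {w\<in>W. v \<le> w}"
        hence "w \<in> W" "s \<le> w" using sv by auto
        thus "w \<in> {w\<in>W. s < w}" using s(2) by (cases "s = w") auto
      qed
      thus ?thesis using W(3) vN XYv by simp
    qed
    define M where "M = Max V"
    have xM: "x $ i \<le> M" "y $ i \<le> M" for i using xV fV M_def by simp_all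
    have WM: "0 < w \<and> w \<le> M" if "w \<in> W" for w
      using that W(1) N_def fV M_def by auto
    define k where "k = m - card W"
    define E where "E = (\<lambda>i. M + 1 + real i) ` {..<k}"
    have cE: "card E = k" unfolding E_def by (subst card_image) (auto simp: inj_on_def)
    have fE: "finite E" unfolding E_def by simp
    have EM: "M < e" if "e \<in> E" for e using that unfolding E_def by auto
    define Z0 where "Z0 = W \<union> E"
    have WE: "W \<inter> E = {}" using WM EM by force
    have fZ0: "finite Z0" using fW fE Z0_def by simp
    have cZ0: "card Z0 = m" unfolding Z0_def using card_Un_disjoint[OF fW fE WE] cE k_def cW by simp
    have Z0pos: "Z0 \<subseteq> {0<..}"
    proof
      fix z assume "z \<in> Z0"
      moreover have "0 \<le> M" using xM(1) x_nonneg order_trans by blast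
      ultimately show "z \<in> {0<..}" using WM EM Z0_def by fastforce
    qed
    obtain k0 :: 'n where True by simp
    have "card (UNIV - {k0}) = m" using nm n_def by simp
    then obtain h where h: "bij_betw h (UNIV - {k0}) Z0"
      using finite_same_card_bij[of "UNIV - {k0}" Z0] fZ0 cZ0 by auto
    obtain e :: "real ^ 'n" where e: "e \<noteq> 0" "\<forall>k. k \<noteq> k0 \<longrightarrow> (\<Sum>j\<in>UNIV. e$j * h k ^ (a j - 1)) = 0"
      using kernel_exists[where b="\<lambda>j. a j - 1" and z=h] by blast
    define Q where "Q = (\<Sum>j\<in>UNIV. monom (e$j) (a j - 1))"
    have polyQ: "poly Q s = (\<Sum>j\<in>UNIV. e$j * s ^ (a j - 1))" for s
      by (simp add: Q_def poly_sum poly_monom)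
    have Qz: "\<forall>z\<in>Z0. poly Q z = 0"
    proof
      fix z assume "z \<in> Z0"
      then obtain kk where "kk \<in> UNIV - {k0}" "z = h kk" using h by (auto simp: bij_betw_def)
      thus "poly Q z = 0" using e(2) polyQ by simp
    qed
    have aeq: "a j - 1 = a j' - 1 \<longleftrightarrow> j = j'" for j j'
    proof
      assume "a j - 1 = a j' - 1"
      hence "a j = a j'" using a_pos[of j] a_pos[of j'] by simp
      thus "j = j'" using a_inj by (simp add: inj_eq)
    qed simp
    have coeffQ: "coeff Q l = (\<Sum>j\<in>UNIV. if a j - 1 = l then e$j else 0)" for l
      by (simp add: Q_def coeff_sum coeff_monom)
    have Q0: "Q \<noteq> 0"
    proof
      assume "Q = 0"
      obtain j1 where j1: "e $ j1 \<noteq> 0" using e(1) by (auto simp: vec_eq_iff)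
      have "coeff Q (a j1 - 1) = (\<Sum>j\<in>UNIV. if j = j1 then e$j else 0)"
        unfolding coeffQ using aeq by (intro sum.cong) auto
      also have "\<dots> = e $ j1" by simp
      finally show False using \<open>Q = 0\<close> j1 by simp
    qed
    have cQ: "card {l. coeff Q l \<noteq> 0} \<le> Suc m"
    proof -
      have "{l. coeff Q l \<noteq> 0} \<subseteq> (\<lambda>j. a j - 1) ` UNIV"
      proof
        fix l assume "l \<in> {l. coeff Q l \<noteq> 0}"
        hence "(\<Sum>j\<in>UNIV. if a j - 1 = l then e$j else 0) \<noteq> 0" using coeffQ by simp
        hence "\<exists>j. (if a j - 1 = l then e$j else 0) \<noteq> 0"
        proof (rule contrapos_np)
          assume "\<not> (\<exists>j. (if a j - 1 = l then e$j else 0) \<noteq> 0)"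
          thus "(\<Sum>j\<in>UNIV. if a j - 1 = l then e$j else 0) = 0" by simp
        qed
        then obtain j where "(if a j - 1 = l then e$j else 0) \<noteq> 0" by blast
        thus "l \<in> (\<lambda>j. a j - 1) ` UNIV" by (auto split: if_splits)
      qed
      hence "card {l. coeff Q l \<noteq> 0} \<le> card ((\<lambda>j. a j - 1) ` (UNIV :: 'n set))"
        by (intro card_mono) auto
      also have "\<dots> \<le> n" unfolding n_def by (rule card_image_le) simp
      finally show ?thesis using nm by simp
    qed
    obtain \<rho> :: real where \<rho>: "\<rho> = 1 \<or> \<rho> = -1"
      "\<forall>s>0. s \<notin> Z0 \<longrightarrow> 0 < \<rho> * (-1) ^ card {z\<in>Z0. s < z} * poly Q s"
      using struct_sign[OF Q0 cQ fZ0 cZ0 Z0pos Qz] by blast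
    define P where "P = (\<Sum>j\<in>UNIV. monom (e$j / real (a j)) (a j))"
    have PQ: "pderiv P = Q"
    proof -
      have "pderiv P = (\<Sum>j\<in>UNIV. monom (of_nat (a j) * (e$j / real (a j))) (a j - 1))"
        unfolding P_def pderiv_sum pderiv_monom ..
      also have "\<dots> = Q" unfolding Q_def
      proof (rule sum.cong[OF refl])
        fix j :: 'n
        have "of_nat (a j) * (e$j / real (a j)) = e$j" using a_pos[of j] by simp
        thus "monom (of_nat (a j) * (e$j / real (a j))) (a j - 1) = monom (e$j) (a j - 1)" by simp
      qed
      finally show ?thesis .
    qed
    have polyP: "poly P s = (\<Sum>j\<in>UNIV. e$j / real (a j) * s ^ a j)" for s
      by (simp add: P_def poly_sum poly_monom)
    have P0: "poly P 0 = 0" unfolding polyP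
    proof (rule sum.neutral, rule ballI)
      fix j :: 'n
      have "(0::real) ^ a j = 0" using a_pos[of j] by simp
      thus "e $ j / real (a j) * 0 ^ a j = 0" by simp
    qed
    have PL: "(\<Sum>i\<in>UNIV. poly P (x$i)) = (\<Sum>i\<in>UNIV. poly P (y$i))"
    proof -
      have "(\<Sum>i\<in>UNIV. poly P (z$i)) = (\<Sum>j\<in>UNIV. e$j / real (a j) * (\<Sum>i\<in>UNIV. (z$i) ^ a j))"
        for z :: "real ^ 'n"
        unfolding polyP sum_distrib_left by (rule sum.swap)
      thus ?thesis using phi_eq by simp
    qed
    define g where "g s = poly Q s * (real (X s) - real (Y s))" for s
    have gint: "(g has_integral 0) {0..M}"
    proof -
      have ix: "((\<lambda>s. poly (pderiv P) s * real (card {i. s \<le> x$i})) has_integral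
           (\<Sum>i\<in>UNIV. poly P (x$i) - poly P 0)) {0..M}"
        by (rule integral_identity) (use x_nonneg xM in auto)
      have iy: "((\<lambda>s. poly (pderiv P) s * real (card {i. s \<le> y$i})) has_integral
           (\<Sum>i\<in>UNIV. poly P (y$i) - poly P 0)) {0..M}"
        by (rule integral_identity) (use y_nonneg xM in auto)
      have "((\<lambda>s. poly (pderiv P) s * real (card {i. s \<le> x$i}) - poly (pderiv P) s * real (card {i. s \<le> y$i}))
          has_integral ((\<Sum>i\<in>UNIV. poly P (x$i) - poly P 0) - (\<Sum>i\<in>UNIV. poly P (y$i) - poly P 0))) {0..M}"
        by (rule has_integral_diff[OF ix iy])
      moreover have "(\<Sum>i\<in>UNIV. poly P (x$i) - poly P 0) - (\<Sum>i\<in>UNIV. poly P (y$i) - poly P 0) = 0"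
        using PL P0 by simp
      moreover have "(\<lambda>s. poly (pderiv P) s * real (card {i. s \<le> x$i}) - poly (pderiv P) s * real (card {i. s \<le> y$i})) = g"
        by (rule ext) (simp add: g_def X_def Y_def PQ algebra_simps)
      ultimately show ?thesis by simp
    qed
    define \<kappa> where "\<kappa> = \<rho> * (-1) ^ card E * real_of_int \<epsilon>0"
    have \<kappa>nz: "\<kappa> \<noteq> 0" using \<rho>(1) W(2) \<kappa>_def by auto
    have sign: "0 \<le> \<kappa> * g s" if s: "s \<in> {0..M}" for s
    proof (cases "s = 0")
      case True thus ?thesis using Xneg[of s] g_def by simp
    next
      case False
      hence spos: "0 < s" using s by simp
      show ?thesis
      proof (cases "s \<in> Z0 \<or> X s = Y s")
        case True thus ?thesis using Qz g_def by auto
      next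
        case False
        hence sZ: "s \<notin> Z0" and sXY: "X s \<noteq> Y s" by auto
        hence sW: "s \<notin> W" using Z0_def by simp
        define cw where "cw = card {w\<in>W. s < w}"
        have A: "0 < real_of_int \<epsilon>0 * (-1)^cw * (real (X s) - real (Y s))"
        proof -
          have "0 < \<epsilon>0 * (-1)^cw * (int (X s) - int (Y s))" using transfer[OF spos sW sXY] cw_def by simp
          hence "0 < real_of_int (\<epsilon>0 * (-1)^cw * (int (X s) - int (Y s)))" by linarith
          thus ?thesis by simp
        qed
        have cz: "card {z\<in>Z0. s < z} = cw + card E"
        proof -
          have "{z\<in>Z0. s < z} = {w\<in>W. s < w} \<union> E" using EM s Z0_def by force
          moreover have "{w\<in>W. s < w} \<inter> E = {}" using WE by blast
          ultimately show ?thesis using fW fE cw_def by (simp add: card_Un_disjoint)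
        qed
        have B: "0 < \<rho> * (-1) ^ (cw + card E) * poly Q s" using \<rho>(2) spos sZ cz by metis
        have "0 < (real_of_int \<epsilon>0 * (-1)^cw * (real (X s) - real (Y s))) * (\<rho> * (-1) ^ (cw + card E) * poly Q s)"
          using A B by simp
        also have "\<dots> = ((-1)^cw * (-1)^cw) * (\<kappa> * g s)"
          unfolding \<kappa>_def g_def power_add by (simp add: algebra_simps)
        also have "(-1::real)^cw * (-1)^cw = 1" by (simp flip: power_add)
        finally show ?thesis by simp
      qed
    qed
    have s0M: "s0 \<le> M"
    proof (rule ccontr)
      assume "\<not> s0 \<le> M"
      hence "{i. s0 \<le> x $ i} = {}" "{i. s0 \<le> y $ i} = {}" using xM by (auto dest: order_trans)
      thus False using s0(2) X_def Y_def by simp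
    qed
    define L where "L = {u\<in>V. u < s0}"
    define c where "c = (if L = {} then 0 else max 0 (Max L))"
    have fL: "finite L" using fV L_def by simp
    have c0: "0 \<le> c" and cs0: "c < s0" using s0(1) fL c_def L_def by auto
    have cL: "u \<le> c" if "u \<in> V" "u < s0" for u
    proof -
      have "u \<in> L" using that L_def by simp
      hence "u \<le> Max L" "L \<noteq> {}" using fL by auto
      thus ?thesis using c_def by simp
    qed
    define c' where "c' = (c + s0) / 2"
    have c'1: "c < c'" "c' < s0" using cs0 c'_def by auto
    have const: "X s = X s0 \<and> Y s = Y s0" if s: "s \<in> {c'..s0}" for s
    proof -
      have "s \<le> u \<longleftrightarrow> s0 \<le> u" if "u \<in> V" for u
      proof
        assume "s \<le> u"
        show "s0 \<le> u"
        proof (rule ccontr)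
          assume "\<not> s0 \<le> u"
          hence "u \<le> c" using cL \<open>u \<in> V\<close> by simp
          thus False using \<open>s \<le> u\<close> s c'1 by simp
        qed
      qed (use s in simp)
      hence "{i. s \<le> x $ i} = {i. s0 \<le> x $ i}" "{i. s \<le> y $ i} = {i. s0 \<le> y $ i}" using xV by auto
      thus ?thesis using X_def Y_def by simp
    qed
    define d0 where "d0 = real (X s0) - real (Y s0)"
    have d0nz: "d0 \<noteq> 0" using s0(2) d0_def by simp
    define hf where "hf s = \<kappa> * d0 * poly Q s" for s
    have hg: "\<kappa> * g s = hf s" if "s \<in> {c'..s0}" for s
      using const[OF that] g_def hf_def d0_def by simp
    have sub: "{c'..s0} \<subseteq> {0..M}" using c0 c'1 s0M by auto
    have kgint: "((\<lambda>s. \<kappa> * g s) has_integral 0) {0..M}"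
      using has_integral_mult_right[OF gint, of \<kappa>] by simp
    have int1: "(\<lambda>s. \<kappa> * g s) integrable_on {0..M}" using kgint by blast
    have int2: "(\<lambda>s. \<kappa> * g s) integrable_on {c'..s0}"
      by (rule integrable_subinterval_real[OF int1 sub])
    have "integral {c'..s0} (\<lambda>s. \<kappa> * g s) \<le> integral {0..M} (\<lambda>s. \<kappa> * g s)"
      by (rule integral_subset_le[OF sub int2 int1]) (use sign in auto)
    also have "\<dots> = 0" using kgint by (rule integral_unique)
    finally have le0: "integral {c'..s0} (\<lambda>s. \<kappa> * g s) \<le> 0" .
    have eqi: "integral {c'..s0} (\<lambda>s. \<kappa> * g s) = integral {c'..s0} hf"
      by (rule Henstock_Kurzweil_Integration.integral_cong) (rule hg)
    have conth: "continuous_on {c'..s0} hf" unfolding hf_def by (intro continuous_intros)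
    have hnn: "\<And>s. s \<in> {c'..s0} \<Longrightarrow> 0 \<le> hf s" using sign sub hg by (metis subsetD)
    have "0 \<le> integral {c'..s0} hf"
      by (rule integral_nonneg) (use conth integrable_continuous_real hnn in auto)
    hence "integral {c'..s0} hf = 0" using le0 eqi by simp
    hence "\<forall>s\<in>{c'..s0}. hf s = 0" using integral_eq_0_iff[OF conth c'1(2) hnn] by simp
    hence "{c'..s0} \<subseteq> {s. poly Q s = 0}" using \<kappa>nz d0nz hf_def by auto
    moreover have "finite {s. poly Q s = 0}" using poly_roots_finite[OF Q0] .
    ultimately have "finite {c'..s0}" by (rule finite_subset)
    thus False using infinite_Icc[OF c'1(2)] by simp
  qed
  have "\<forall>s. card {i. s \<le> x $ i} = card {i. s \<le> y $ i}"
  proof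
    fix s show "card {i. s \<le> x $ i} = card {i. s \<le> y $ i}"
      using key Xneg[of s] X_def Y_def by (cases "s \<le> 0") auto
  qed
  hence "\<And>v. card {i. x $ i = v} = card {i. y $ i = v}"
    using counts_from_X[of "\<lambda>i. x $ i" "\<lambda>i. y $ i"] by blast
  thus ?thesis using perm_from_counts[of "\<lambda>i. x $ i" "\<lambda>i. y $ i"] by blast
qed

end
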